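(* Consider the following market. There are $n$ agents $[n]=\{1,\dots,n\}$ and a seller with an unlimited supply of an identical good (at most one copy per agent, zero production cost). Each agent $i$ has a private valuation function $v_i:2^{[n]}\to\mathbb{R}$ assigning a value to every possible winning set $S\subseteq[n]$, satisfying: $v_i(S)\ge 0$; $v_i(S)=0$ if $i\notin S$; $v_i(S)\le v_i(R)$ whenever $S\subseteq R$; and $v_i(S\cup R)\le v_i(S)+v_i(R)$ for all $S,R\subseteq[n]$ with $i\in S\cap R$. Agents report bid functions $b_i:2^{[n]}\to\mathbb{R}_{\ge 0}$ (possibly different from $v_i$). Define the mechanism $\mathcal{M}$ as follows. 1. Independently and uniformly at random put every agent into one of three sets $A,B,C$. 2. For $X\in\{A,B\}$ let $r_X(C)=\max\{c\cdot|T| : c\ge 0,\ T\subseteq C,\ b_i(T\cup X)\ge c \text{ for all } i\in T\}$, and let $r(C)=\max\{r_A(C),r_B(C)\}$. 3. Give the good to every agent of $A$ for free (price $0$). 4. Run the following cost-sharing procedure with $r=r(C)$, $X=B$, $Y=A$: set $S\leftarrow X$; repeat: let $T=\{i\in S : b_i(S\cup Y)<r/|S|\}$ and set $S\leftarrow S\setminus T$, until $T=\emptyset$. If at the end $S\neq\emptyset$, sell the good to every agent of $S$ at price $r/|S|$. Agents of $C$ and agents of $B$ not sold the good receive nothing and pay nothing. Then $\mathcal{M}$ is universally truthful.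
   Context: For a deterministic mechanism that selects a winning set $S$ and charges each $i\in S$ a price $p_i$ (agents outside $S$ pay $0$), the utility of agent $i$ is $v_i(S)-p_i$ if $i\in S$ and $0$ otherwise. A deterministic mechanism is truthful if for every agent $i$ and every fixed reports of the other agents, reporting $b_i=v_i$ maximizes agent $i$'s utility over all possible reports $b_i$. A randomized mechanism is universally truthful if it is a probability distribution over deterministic truthful mechanisms. *)

theory Defs
  imports "HOL-Probability.Probability"
begin

text \<open>Agents are 1..n. A bid profile / valuation profile maps each agent to a
function on sets of agents.\<close>

type_synonym profile = "nat \<Rightarrow> nat set \<Rightarrow> real"
type_synonym outcome = "nat set \<times> (nat \<Rightarrow> real)"   (* winning set, prices *)
type_synonym mechanism = "profile \<Rightarrow> outcome"

definition valuation :: "nat \<Rightarrow> nat \<Rightarrow> (nat set \<Rightarrow> real) \<Rightarrow> bool" where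
  "valuation n i v \<longleftrightarrow>
     (\<forall>S. S \<subseteq> {1..n} \<longrightarrow> v S \<ge> 0) \<and>
     (\<forall>S. S \<subseteq> {1..n} \<longrightarrow> i \<notin> S \<longrightarrow> v S = 0) \<and>
     (\<forall>S R. S \<subseteq> R \<longrightarrow> R \<subseteq> {1..n} \<longrightarrow> v S \<le> v R) \<and>
     (\<forall>S R. S \<subseteq> {1..n} \<longrightarrow> R \<subseteq> {1..n} \<longrightarrow> i \<in> S \<inter> R \<longrightarrow> v (S \<union> R) \<le> v S + v R)"

definition valid_bid :: "nat \<Rightarrow> (nat set \<Rightarrow> real) \<Rightarrow> bool" where
  "valid_bid n b \<longleftrightarrow> (\<forall>S. S \<subseteq> {1..n} \<longrightarrow> b S \<ge> 0)"

definition utility :: "nat \<Rightarrow> (nat set \<Rightarrow> real) \<Rightarrow> outcome \<Rightarrow> real" where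
  "utility i v out = (if i \<in> fst out then v (fst out) - snd out i else 0)"

definition truthful :: "nat \<Rightarrow> mechanism \<Rightarrow> bool" where
  "truthful n M \<longleftrightarrow>
     (\<forall>i \<in> {1..n}. \<forall>v b b'.
        valuation n i v \<and> (\<forall>j \<in> {1..n}. valid_bid n (b j)) \<and> valid_bid n b' \<longrightarrow>
        utility i v (M (b(i := b'))) \<le> utility i v (M (b(i := v))))"

definition universally_truthful :: "nat \<Rightarrow> mechanism pmf \<Rightarrow> bool" where
  "universally_truthful n D \<longleftrightarrow> (\<forall>M \<in> set_pmf D. truthful n M)"

datatype part = PA | PB | PC

text \<open>r_X(C) = max { c |T| : c \<ge> 0, T \<subseteq> C, b_i(T \<union> X) \<ge> c for all i \<in> T }
  (the maximum exists; we write it as Sup).\<close>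
definition r_X :: "profile \<Rightarrow> nat set \<Rightarrow> nat set \<Rightarrow> real" where
  "r_X b X C = Sup {c * real (card T) | c T. c \<ge> 0 \<and> T \<subseteq> C \<and> (\<forall>i \<in> T. b i (T \<union> X) \<ge> c)}"

definition r_C :: "profile \<Rightarrow> nat set \<Rightarrow> nat set \<Rightarrow> nat set \<Rightarrow> real" where
  "r_C b A B C = max (r_X b A C) (r_X b B C)"

function cs_loop :: "real \<Rightarrow> nat set \<Rightarrow> profile \<Rightarrow> nat set \<Rightarrow> nat set" where
  "cs_loop r Y b S =
     (let T = {i \<in> S. b i (S \<union> Y) < r / real (card S)} in
      if T = {} \<or> infinite S then S else cs_loop r Y b (S - T))"
  by pat_completeness auto
termination
  apply (relation "Wellfounded.measure (\<lambda>(r, Y, b, S). card S)")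
   apply simp
  apply clarsimp
  apply (rule psubset_card_mono)
   apply auto
  done

definition part_set :: "nat \<Rightarrow> (nat \<Rightarrow> part) \<Rightarrow> part \<Rightarrow> nat set" where
  "part_set n \<sigma> p = {i \<in> {1..n}. \<sigma> i = p}"

definition det_mech :: "nat \<Rightarrow> (nat \<Rightarrow> part) \<Rightarrow> mechanism" where
  "det_mech n \<sigma> b =
     (let A = part_set n \<sigma> PA; B = part_set n \<sigma> PB; C = part_set n \<sigma> PC;
          r = r_C b A B C;
          S = cs_loop r A b B
      in if S \<noteq> {} then (A \<union> S, \<lambda>i. if i \<in> S then r / real (card S) else 0)
         else (A, \<lambda>i. 0))"

text \<open>Each agent independently and uniformly in A, B or C: uniform over all
  assignments {1..n} \<rightarrow> {A,B,C}.\<close>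
definition assignments :: "nat \<Rightarrow> (nat \<Rightarrow> part) set" where
  "assignments n = PiE {1..n} (\<lambda>_. {PA, PB, PC})"

definition mech_M :: "nat \<Rightarrow> mechanism pmf" where
  "mech_M n = map_pmf (det_mech n) (pmf_of_set (assignments n))"

end

theory Submission
  imports Defs
begin

declare cs_loop.simps[simp del]

lemma cs_sub: "cs_loop r Y b S \<subseteq> S"
proof (induction r Y b S rule: cs_loop.induct)
  case (1 r Y b S)
  show ?case
    apply (subst cs_loop.simps)
    using 1 by (auto simp: Let_def)
qed

lemma cs_final: "finite S \<Longrightarrow> j \<in> cs_loop r Y b S \<Longrightarrow>
   b j (cs_loop r Y b S \<union> Y) \<ge> r / card (cs_loop r Y b S)"
proof (induction r Y b S rule: cs_loop.induct)
  case (1 r Y b S)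
  define T where "T = {i \<in> S. b i (S \<union> Y) < r / real (card S)}"
  show ?case
  proof (cases "T = {}")
    case True
    have e: "cs_loop r Y b S = S" by (subst cs_loop.simps) (simp add: Let_def T_def[symmetric] True)
    show ?thesis using 1(3) True unfolding e T_def by auto
  next
    case False
    have e: "cs_loop r Y b S = cs_loop r Y b (S - T)"
      by (subst cs_loop.simps) (simp add: Let_def T_def[symmetric] False 1(2))
    show ?thesis unfolding e using 1(1)[OF T_def] False 1(2,3) e by auto
  qed
qed

lemma cs_cong: "\<forall>j\<in>S. b1 j = b2 j \<Longrightarrow> cs_loop r Y b1 S = cs_loop r Y b2 S"
proof (induction r Y b1 S rule: cs_loop.induct)
  case (1 r Y b1 S)
  define T where "T = {i \<in> S. b1 i (S \<union> Y) < r / real (card S)}"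
  have T2: "T = {i \<in> S. b2 i (S \<union> Y) < r / real (card S)}" using 1(2) unfolding T_def by auto
  show ?case
  proof (cases "T = {} \<or> infinite S")
    case True
    show ?thesis
      apply (subst (1 2) cs_loop.simps)
      using True by (simp add: Let_def T_def[symmetric] T2[symmetric])
  next
    case False
    have "cs_loop r Y b1 (S - T) = cs_loop r Y b2 (S - T)"
      using 1(1)[OF T_def False] 1(2) by auto
    then show ?thesis
      apply (subst (1 2) cs_loop.simps)
      using False by (simp add: Let_def T_def[symmetric] T2[symmetric])
  qed
qed

lemma cs_dev:
  assumes "\<forall>j. j \<noteq> i \<longrightarrow> b1 j = b2 j" "b1 i = v"
  shows "cs_loop r Y b1 S = cs_loop r Y b2 S \<or> i \<notin> cs_loop r Y b2 S \<or>
    (\<exists>S0. cs_loop r Y b2 S \<subseteq> S0 \<and> S0 \<subseteq> S \<and> finite S0 \<and> i \<in> S0 \<and> v (S0 \<union> Y) < r / card S0)"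
  using assms
proof (induction r Y b1 S rule: cs_loop.induct)
  case (1 r Y b1 S)
  define T1 where "T1 = {i \<in> S. b1 i (S \<union> Y) < r / real (card S)}"
  define T2 where "T2 = {i \<in> S. b2 i (S \<union> Y) < r / real (card S)}"
  show ?case
  proof (cases "infinite S")
    case True
    then show ?thesis by (subst (1 2) cs_loop.simps) simp
  next
    case fin: False
    show ?thesis
    proof (cases "T1 = T2")
      case True
      show ?thesis
      proof (cases "T1 = {}")
        case True
        then show ?thesis using \<open>T1 = T2\<close>
          by (subst (1 2) cs_loop.simps) (simp add: Let_def T1_def[symmetric] T2_def[symmetric])
      next
        case False
        have e1: "cs_loop r Y b1 S = cs_loop r Y b1 (S - T1)"
          by (subst cs_loop.simps) (simp add: Let_def T1_def[symmetric] False fin)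
        have e2: "cs_loop r Y b2 S = cs_loop r Y b2 (S - T1)"
          by (subst cs_loop.simps) (simp add: Let_def T2_def[symmetric] \<open>T1 = T2\<close>[symmetric] False fin)
        have IH: "cs_loop r Y b1 (S - T1) = cs_loop r Y b2 (S - T1) \<or> i \<notin> cs_loop r Y b2 (S - T1) \<or>
          (\<exists>S0. cs_loop r Y b2 (S - T1) \<subseteq> S0 \<and> S0 \<subseteq> S - T1 \<and> finite S0 \<and> i \<in> S0 \<and> v (S0 \<union> Y) < r / card S0)"
          using 1(1)[OF T1_def] False fin 1(2,3) by auto
        show ?thesis unfolding e1 e2 using IH by blast
      qed
    next
      case False
      have oth: "\<And>j. j \<noteq> i \<Longrightarrow> j \<in> T1 \<longleftrightarrow> j \<in> T2" using 1(2) unfolding T1_def T2_def by auto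
      have "(i \<in> T1 \<and> i \<notin> T2) \<or> (i \<in> T2 \<and> i \<notin> T1)"
      proof (rule ccontr)
        assume "\<not> ?thesis"
        then have "T1 = T2" using oth by (intro set_eqI) metis
        then show False using False by simp
      qed
      then show ?thesis
      proof
        assume h: "i \<in> T1 \<and> i \<notin> T2"
        then have "v (S \<union> Y) < r / card S" "i \<in> S" using 1(3) unfolding T1_def by auto
        then show ?thesis using cs_sub[of r Y b2 S] fin by blast
      next
        assume h: "i \<in> T2 \<and> i \<notin> T1"
        then have "T2 \<noteq> {}" by auto
        have e2: "cs_loop r Y b2 S = cs_loop r Y b2 (S - T2)"
          by (subst cs_loop.simps) (simp add: Let_def T2_def[symmetric] \<open>T2 \<noteq> {}\<close> fin)
        have "i \<notin> cs_loop r Y b2 S" unfolding e2 using cs_sub[of r Y b2 "S - T2"] h by blast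
        then show ?thesis by blast
      qed
    qed
  qed
qed

lemma rX_cong: "\<forall>j\<in>C. b1 j = b2 j \<Longrightarrow> r_X b1 X C = r_X b2 X C"
  unfolding r_X_def
  apply (rule arg_cong[where f=Sup])
  apply (rule Collect_cong)
  apply (rule iffI)
   apply (elim exE conjE, intro exI conjI, assumption, assumption, assumption)
   apply (metis subsetD)
  apply (elim exE conjE, intro exI conjI, assumption, assumption, assumption)
  apply (metis subsetD)
  done

lemma det_fst: "fst (det_mech n \<sigma> bb) \<subseteq> part_set n \<sigma> PA \<union> part_set n \<sigma> PB"
  using cs_sub[of _ "part_set n \<sigma> PA" bb "part_set n \<sigma> PB"]
  unfolding det_mech_def Let_def by auto

lemma util_B:
  assumes "\<sigma> i = PB"
  shows "utility i v (det_mech n \<sigma> bb) =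
    (let r = r_C bb (part_set n \<sigma> PA) (part_set n \<sigma> PB) (part_set n \<sigma> PC);
         F = cs_loop r (part_set n \<sigma> PA) bb (part_set n \<sigma> PB) in
     if i \<in> F then v (part_set n \<sigma> PA \<union> F) - r / card F else 0)"
  using assms unfolding det_mech_def utility_def Let_def part_set_def by auto

lemma det_truthful: "truthful n (det_mech n \<sigma>)"
  unfolding truthful_def
proof (intro ballI allI impI)
  fix i v b b'
  assume i: "i \<in> {1..n}"
    and h: "valuation n i v \<and> (\<forall>j\<in>{1..n}. valid_bid n (b j)) \<and> valid_bid n b'"
  define A where "A = part_set n \<sigma> PA"
  define B where "B = part_set n \<sigma> PB"
  define C where "C = part_set n \<sigma> PC"
  define b1 where "b1 = b(i := v)"
  define b2 where "b2 = b(i := b')"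
  have val: "valuation n i v" using h by simp
  show "utility i v (det_mech n \<sigma> b2) \<le> utility i v (det_mech n \<sigma> b1)"
  proof (cases "\<sigma> i")
    case PC
    have "i \<notin> A \<union> B" using PC unfolding A_def B_def part_set_def by auto
    then have "i \<notin> fst (det_mech n \<sigma> bb)" for bb using det_fst[of n \<sigma> bb] A_def B_def by blast
    then show ?thesis unfolding utility_def by simp
  next
    case PA
    have iC: "i \<notin> C" "i \<notin> B" using PA unfolding C_def B_def part_set_def by auto
    have "r_X b1 X C = r_X b2 X C" for X
      by (rule rX_cong) (use iC in \<open>auto simp: b1_def b2_def\<close>)
    then have r: "r_C b1 A B C = r_C b2 A B C" unfolding r_C_def by simp
    have cse: "cs_loop rr A b1 B = cs_loop rr A b2 B" for rr
      by (rule cs_cong) (use iC in \<open>auto simp: b1_def b2_def\<close>)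
    have "det_mech n \<sigma> b1 = det_mech n \<sigma> b2"
      unfolding det_mech_def Let_def A_def[symmetric] B_def[symmetric] C_def[symmetric] r cse by simp
    then show ?thesis by simp
  next
    case PB
    have iC: "i \<notin> C" "i \<notin> A" "i \<in> B" using PB i unfolding C_def A_def B_def part_set_def by auto
    have "r_X b1 X C = r_X b2 X C" for X
      by (rule rX_cong) (use iC in \<open>auto simp: b1_def b2_def\<close>)
    then have req: "r_C b1 A B C = r_C b2 A B C" unfolding r_C_def by simp
    define r where "r = r_C b1 A B C"
    define F1 where "F1 = cs_loop r A b1 B"
    define F2 where "F2 = cs_loop r A b2 B"
    have u1: "utility i v (det_mech n \<sigma> b1) = (if i \<in> F1 then v (A \<union> F1) - r / card F1 else 0)"
      using util_B[where \<sigma>=\<sigma> and i=i, OF PB, of v n b1] unfolding Let_def A_def[symmetric] B_def[symmetric] C_def[symmetric]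
        r_def[symmetric] F1_def[symmetric] by simp
    have u2: "utility i v (det_mech n \<sigma> b2) = (if i \<in> F2 then v (A \<union> F2) - r / card F2 else 0)"
      using util_B[where \<sigma>=\<sigma> and i=i, OF PB, of v n b2] unfolding Let_def A_def[symmetric] B_def[symmetric] C_def[symmetric]
        req[symmetric] r_def[symmetric] F2_def[symmetric] by simp
    have finB: "finite B" unfolding B_def part_set_def by simp
    have Bsub: "B \<subseteq> {1..n}" "A \<subseteq> {1..n}" unfolding A_def B_def part_set_def by auto
    have nn1: "utility i v (det_mech n \<sigma> b1) \<ge> 0"
    proof (cases "i \<in> F1")
      case True
      have "b1 i (F1 \<union> A) \<ge> r / card F1" using cs_final[OF finB, of i r A b1] True F1_def by simp
      then show ?thesis using True u1 by (simp add: b1_def Un_commute)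
    qed (use u1 in simp)
    have "F1 = F2 \<or> i \<notin> F2 \<or>
      (\<exists>S0. F2 \<subseteq> S0 \<and> S0 \<subseteq> B \<and> finite S0 \<and> i \<in> S0 \<and> v (S0 \<union> A) < r / card S0)"
      unfolding F1_def F2_def by (rule cs_dev) (auto simp: b1_def b2_def)
    then show ?thesis
    proof (elim disjE exE conjE)
      assume "F1 = F2" then show ?thesis using u1 u2 by simp
    next
      assume "i \<notin> F2" then show ?thesis using u2 nn1 by simp
    next
      fix S0 assume s: "F2 \<subseteq> S0" "S0 \<subseteq> B" "finite S0" "i \<in> S0" "v (S0 \<union> A) < r / card S0"
      show ?thesis
      proof (cases "i \<in> F2")
        case False then show ?thesis using u2 nn1 by simp
      next
        case True
        have mono: "v (A \<union> F2) \<le> v (S0 \<union> A)"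
          using val s Bsub unfolding valuation_def by (meson Un_least le_supI1 le_supI2 order_trans sup.cobounded2 sup_mono)
        have "v (S0 \<union> A) \<ge> 0" using val s Bsub unfolding valuation_def by auto
        have c0: "card S0 > 0" using s by (auto simp: card_gt_0_iff)
        have "r > 0" using s(5) \<open>v (S0 \<union> A) \<ge> 0\<close> c0
          by (smt (verit) divide_nonpos_pos of_nat_0_less_iff)
        have cF: "card F2 > 0" "card F2 \<le> card S0"
          using True s finite_subset[OF s(1) s(3)] by (auto simp: card_gt_0_iff card_mono)
        have "r / card S0 \<le> r / card F2"
          using \<open>r > 0\<close> cF by (intro divide_left_mono) auto
        then have "utility i v (det_mech n \<sigma> b2) < 0" using u2 True mono s(5) by simp
        then show ?thesis using nn1 by simp
      qed
    qed
  qed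
qed

theorem lemma1:
  shows "universally_truthful n (mech_M n)"
  unfolding universally_truthful_def mech_M_def using det_truthful by auto

end
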